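(* Let $M$ be a smooth manifold with a symmetric (torsion-free) affine connection $\nabla$ and Riemann tensor $R_{abc}{}^d$. Then for all indices $$\nabla_{(a}\nabla_bR_{cd)e}{}^f = R_{(abc}{}^m R_{d)me}{}^f - R_{ace}{}^m R_{bdm}{}^f + R_{acm}{}^f R_{bde}{}^m .$$
   Context: Abstract index notation with Einstein summation is used. The connection has Christoffel symbols $\Gamma^c_{ab}=\Gamma^c_{ba}$, and the Riemann tensor is $R_{abc}{}^d = \partial_a \Gamma_{bc}^d - \partial_b\Gamma_{ac}^d - \Gamma_{ac}^k\Gamma_{bk}^d + \Gamma_{ak}^d \Gamma_{bc}^k$. The notation $(abcd)$ on a group of indices denotes the sum over the four cyclic permutations of $(a,b,c,d)$: e.g. $\nabla_{(a}\nabla_bR_{cd)e}{}^f=\nabla_a\nabla_bR_{cde}{}^f+\nabla_b\nabla_cR_{dae}{}^f+\nabla_c\nabla_dR_{abe}{}^f+\nabla_d\nabla_aR_{bce}{}^f$ and $R_{(abc}{}^m R_{d)me}{}^f = R_{abc}{}^m R_{dme}{}^f+R_{bcd}{}^m R_{ame}{}^f+R_{cda}{}^m R_{bme}{}^f+R_{dab}{}^m R_{cme}{}^f$. *)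

theory Defs
  imports "HOL-Analysis.Analysis"
begin

text \<open>Local coordinate setting: a chart domain U (open subset of R^n, n = CARD('n)),
  coordinates x :: real^'n.  A connection is given by its Christoffel symbols
  Gam c a b x = Gamma^c_{ab}(x).\<close>

definition partial :: "'n::finite \<Rightarrow> (real^'n \<Rightarrow> real) \<Rightarrow> real^'n \<Rightarrow> real" where
  "partial i f x = deriv (\<lambda>t. f (x + t *\<^sub>R axis i 1)) 0"

definition smooth_on :: "(real^'n::finite) set \<Rightarrow> (real^'n \<Rightarrow> real) \<Rightarrow> bool" where
  "smooth_on U f \<longleftrightarrow> (\<forall>is. foldr partial is f differentiable_on U)"

text \<open>Tensor fields with lower indices ls and upper indices us.\<close>
type_synonym 'n tensor = "'n list \<Rightarrow> 'n list \<Rightarrow> real^'n \<Rightarrow> real"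

text \<open>Covariant derivative: (nabla T) (a # ls) us = nabla_a T_{ls}^{us}.\<close>
definition nabla :: "('n::finite \<Rightarrow> 'n \<Rightarrow> 'n \<Rightarrow> real^'n \<Rightarrow> real) \<Rightarrow> 'n tensor \<Rightarrow> 'n tensor" where
  "nabla Gam T ls us x = (case ls of [] \<Rightarrow> 0 | a # ls' \<Rightarrow>
      partial a (T ls' us) x
      - (\<Sum>i<length ls'. \<Sum>k\<in>UNIV. Gam k a (ls' ! i) x * T (ls'[i := k]) us x)
      + (\<Sum>j<length us. \<Sum>k\<in>UNIV. Gam (us ! j) a k x * T ls' (us[j := k]) x))"

definition riem :: "('n::finite \<Rightarrow> 'n \<Rightarrow> 'n \<Rightarrow> real^'n \<Rightarrow> real) \<Rightarrow> 'n \<Rightarrow> 'n \<Rightarrow> 'n \<Rightarrow> 'n \<Rightarrow> real^'n \<Rightarrow> real" where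
  "riem Gam a b c d x = partial a (Gam d b c) x - partial b (Gam d a c) x
     - (\<Sum>k\<in>UNIV. Gam k a c x * Gam d b k x) + (\<Sum>k\<in>UNIV. Gam d a k x * Gam k b c x)"

definition riemT :: "('n::finite \<Rightarrow> 'n \<Rightarrow> 'n \<Rightarrow> real^'n \<Rightarrow> real) \<Rightarrow> 'n tensor" where
  "riemT Gam ls us x = riem Gam (ls ! 0) (ls ! 1) (ls ! 2) (us ! 0) x"

end

theory Submission
  imports Defs
begin

lemma line_has_deriv:
  fixes f :: "real^'n::finite \<Rightarrow> real"
  assumes "(f has_derivative f') (at (p + s *\<^sub>R v))"
  shows "((\<lambda>t. f (p + t *\<^sub>R v)) has_real_derivative f' v) (at s)"
proof -
  have l: "linear f'" using assms has_derivative_linear by blast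
  have "((\<lambda>t. p + t *\<^sub>R v) has_derivative (\<lambda>t. t *\<^sub>R v)) (at s)"
    by (auto intro!: derivative_eq_intros)
  from has_derivative_compose[OF this assms]
  have "((\<lambda>t. f (p + t *\<^sub>R v)) has_derivative (\<lambda>t. f' (t *\<^sub>R v))) (at s)" by simp
  moreover have "(\<lambda>t. f' (t *\<^sub>R v)) = (\<lambda>t. t * f' v)"
    using l by (auto simp: linear_scale)
  moreover have "(\<lambda>t. t * f' v) = (*) (f' v)" by (auto simp: mult.commute)
  ultimately show ?thesis by (simp add: has_field_derivative_def)
qed

lemma partial_hasD:
  fixes f :: "real^'n::finite \<Rightarrow> real"
  assumes "(f has_derivative f') (at y)"
  shows "partial i f y = f' (axis i 1)"
proof -
  have "((\<lambda>t. f (y + t *\<^sub>R axis i 1)) has_real_derivative f' (axis i 1)) (at 0)"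
    using line_has_deriv[of f f' y 0] assms by simp
  then show ?thesis unfolding partial_def by (rule DERIV_imp_deriv)
qed

lemma partial_local:
  fixes f g :: "real^'n::finite \<Rightarrow> real"
  assumes "open U" "y \<in> U" "\<And>z. z \<in> U \<Longrightarrow> f z = g z"
  shows "partial i f y = partial i g y"
proof -
  obtain e where e: "e > 0" "ball y e \<subseteq> U" using assms(1,2) open_contains_ball by blast
  have "eventually (\<lambda>t::real. dist t 0 < e) (nhds 0)"
    using e(1) eventually_nhds_metric by blast
  then have "eventually (\<lambda>t. f (y + t *\<^sub>R axis i 1) = g (y + t *\<^sub>R axis i 1)) (nhds 0)"
  proof (rule eventually_mono)
    fix t :: real assume "dist t 0 < e"
    then have "y + t *\<^sub>R axis i 1 \<in> ball y e" by (simp add: dist_norm)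
    then show "f (y + t *\<^sub>R axis i 1) = g (y + t *\<^sub>R axis i 1)" using e assms(3) by blast
  qed
  then show ?thesis unfolding partial_def by (rule deriv_cong_ev) simp
qed


lemma partial_frechet:
  fixes f :: "real^'n::finite \<Rightarrow> real"
  assumes "f differentiable (at y)"
  shows "partial i f y = frechet_derivative f (at y) (axis i 1)"
  using partial_hasD assms frechet_derivative_works by blast

lemma partial_add:
  fixes f g :: "real^'n::finite \<Rightarrow> real"
  assumes "f differentiable (at y)" "g differentiable (at y)"
  shows "partial i (\<lambda>z. f z + g z) y = partial i f y + partial i g y"
proof -
  have "((\<lambda>z. f z + g z) has_derivative (\<lambda>h. frechet_derivative f (at y) h + frechet_derivative g (at y) h)) (at y)"
    using assms by (intro has_derivative_add) (simp_all add: frechet_derivative_works[symmetric])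
  from partial_hasD[OF this, of i] show ?thesis using assms by (simp add: partial_frechet)
qed

lemma partial_diff:
  fixes f g :: "real^'n::finite \<Rightarrow> real"
  assumes "f differentiable (at y)" "g differentiable (at y)"
  shows "partial i (\<lambda>z. f z - g z) y = partial i f y - partial i g y"
proof -
  have "((\<lambda>z. f z - g z) has_derivative (\<lambda>h. frechet_derivative f (at y) h - frechet_derivative g (at y) h)) (at y)"
    using assms by (intro has_derivative_diff) (simp_all add: frechet_derivative_works[symmetric])
  from partial_hasD[OF this, of i] show ?thesis using assms by (simp add: partial_frechet)
qed

lemma partial_uminus:
  fixes f :: "real^'n::finite \<Rightarrow> real"
  assumes "f differentiable (at y)"
  shows "partial i (\<lambda>z. - f z) y = - partial i f y"
proof -
  have "((\<lambda>z. - f z) has_derivative (\<lambda>h. - frechet_derivative f (at y) h)) (at y)"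
    using assms by (intro has_derivative_minus) (simp_all add: frechet_derivative_works[symmetric])
  from partial_hasD[OF this, of i] show ?thesis using assms by (simp add: partial_frechet)
qed

lemma partial_mult:
  fixes f g :: "real^'n::finite \<Rightarrow> real"
  assumes "f differentiable (at y)" "g differentiable (at y)"
  shows "partial i (\<lambda>z. f z * g z) y = partial i f y * g y + f y * partial i g y"
proof -
  have "((\<lambda>z. f z * g z) has_derivative (\<lambda>h. f y * frechet_derivative g (at y) h + frechet_derivative f (at y) h * g y)) (at y)"
    using assms by (intro has_derivative_mult) (simp_all add: frechet_derivative_works[symmetric])
  from partial_hasD[OF this, of i] show ?thesis using assms by (simp add: partial_frechet)
qed

lemma partial_const: "partial i (\<lambda>z. c) y = 0"
  unfolding partial_def by (simp add: DERIV_imp_deriv)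

lemma partial_sum:
  fixes f :: "'k \<Rightarrow> real^'n::finite \<Rightarrow> real"
  assumes "\<And>k. k \<in> S \<Longrightarrow> f k differentiable (at y)"
  shows "partial i (\<lambda>z. \<Sum>k\<in>S. f k z) y = (\<Sum>k\<in>S. partial i (f k) y)"
proof -
  have "((\<lambda>z. \<Sum>k\<in>S. f k z) has_derivative (\<lambda>h. \<Sum>k\<in>S. frechet_derivative (f k) (at y) h)) (at y)"
    using assms by (intro has_derivative_sum) (simp_all add: frechet_derivative_works[symmetric])
  from partial_hasD[OF this, of i] show ?thesis using assms by (simp add: partial_frechet)
qed


lemma diff_on_transfer:
  fixes f g :: "real^'n::finite \<Rightarrow> real"
  assumes "open U" "\<And>y. y \<in> U \<Longrightarrow> f y = g y" "g differentiable_on U"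
  shows "f differentiable_on U"
proof -
  have "f differentiable (at y)" if "y \<in> U" for y
  proof -
    have "g differentiable (at y)" using assms(1,3) that differentiable_on_eq_differentiable_at by blast
    then obtain g' where "(g has_derivative g') (at y)" unfolding differentiable_def by blast
    then have "(f has_derivative g') (at y)"
      by (rule has_derivative_transform_within_open[OF _ assms(1) that]) (simp add: assms(2))
    then show ?thesis unfolding differentiable_def by blast
  qed
  then show ?thesis using assms(1) differentiable_on_eq_differentiable_at by blast
qed

lemma smooth_principle:
  fixes F :: "(real^'n::finite \<Rightarrow> real) set"
  assumes U: "open U"
    and D: "\<And>f. f \<in> F \<Longrightarrow> f differentiable_on U"
    and P: "\<And>f i. f \<in> F \<Longrightarrow> \<exists>g\<in>F. \<forall>y\<in>U. partial i f y = g y"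
    and f: "f \<in> F"
  shows "smooth_on U f"
proof -
  have *: "\<exists>g\<in>F. \<forall>y\<in>U. foldr partial is f y = g y" for "is"
  proof (induction "is")
    case Nil then show ?case using f by auto
  next
    case (Cons i "is")
    then obtain g where g: "g \<in> F" "\<forall>y\<in>U. foldr partial is f y = g y" by blast
    obtain g' where g': "g' \<in> F" "\<forall>y\<in>U. partial i g y = g' y" using P[OF g(1)] by blast
    have "\<forall>y\<in>U. foldr partial (i # is) f y = g' y"
      using partial_local[OF U _ , of _ "foldr partial is f" g] g g' by simp
    then show ?case using g' by blast
  qed
  show ?thesis unfolding smooth_on_def
  proof
    fix "is"
    obtain g where "g \<in> F" "\<forall>y\<in>U. foldr partial is f y = g y" using * by blast
    then show "foldr partial is f differentiable_on U"
      using diff_on_transfer[OF U, of "foldr partial is f" g] D by blast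
  qed
qed

lemma smooth_partial: "smooth_on U f \<Longrightarrow> smooth_on U (partial i f)"
  unfolding smooth_on_def
proof
  fix "is" assume "\<forall>is. foldr partial is f differentiable_on U"
  then have "foldr partial (is @ [i]) f differentiable_on U" by blast
  then show "foldr partial is (partial i f) differentiable_on U" by simp
qed

lemma smooth_diffon: "smooth_on U f \<Longrightarrow> f differentiable_on U"
  unfolding smooth_on_def by (drule spec[of _ "[]"]) simp

lemma smooth_at: "open U \<Longrightarrow> smooth_on U f \<Longrightarrow> y \<in> U \<Longrightarrow> f differentiable (at y)"
  using smooth_diffon differentiable_on_eq_differentiable_at by blast

lemma smooth_cong:
  assumes U: "open U" and f: "smooth_on U f" and eq: "\<And>y. y \<in> U \<Longrightarrow> f y = g y"
  shows "smooth_on U g"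
proof (rule smooth_principle[OF U, of "{g. \<exists>f. smooth_on U f \<and> (\<forall>y\<in>U. f y = g y)}"])
  show "h differentiable_on U" if hh: "h \<in> {g. \<exists>f. smooth_on U f \<and> (\<forall>y\<in>U. f y = g y)}" for h
  proof -
    obtain f where "smooth_on U f" "\<forall>y\<in>U. f y = h y" using hh by blast
    then show ?thesis using diff_on_transfer[OF U, of h f] smooth_diffon by auto
  qed
  show "\<exists>g\<in>{g. \<exists>f. smooth_on U f \<and> (\<forall>y\<in>U. f y = g y)}. \<forall>y\<in>U. partial i h y = g y"
    if hh: "h \<in> {g. \<exists>f. smooth_on U f \<and> (\<forall>y\<in>U. f y = g y)}" for h i
  proof -
    obtain f where "smooth_on U f" "\<forall>y\<in>U. f y = h y" using hh by blast
    then have "smooth_on U (partial i f)" "\<forall>y\<in>U. partial i f y = partial i h y"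
      using smooth_partial[of U f i] partial_local[OF U, of _ f h i] by auto
    then show ?thesis by blast
  qed
qed (use f eq in auto)

lemma smooth_const: "open U \<Longrightarrow> smooth_on U (\<lambda>y. c)"
proof (rule smooth_principle[of U "range (\<lambda>c. \<lambda>y. c)"])
  show "\<exists>g\<in>range (\<lambda>c y. c). \<forall>y\<in>U. partial i f y = g y" if hh: "f \<in> range (\<lambda>c y. c)" for f i
    using hh partial_const by auto
  show "f differentiable_on U" if "f \<in> range (\<lambda>c y. c)" for f
    using that by auto
qed auto

lemma smooth_add:
  assumes U: "open U" and "smooth_on U f" "smooth_on U g"
  shows "smooth_on U (\<lambda>y. f y + g y)"
proof (rule smooth_principle[OF U, of "{h. \<exists>f g. smooth_on U f \<and> smooth_on U g \<and> h = (\<lambda>y. f y + g y)}"])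
  show "h differentiable_on U" if hh: "h \<in> {h. \<exists>f g. smooth_on U f \<and> smooth_on U g \<and> h = (\<lambda>y. f y + g y)}" for h
  proof -
    obtain f g where fg: "smooth_on U f" "smooth_on U g" "h = (\<lambda>y. f y + g y)" using hh by blast
    show ?thesis unfolding fg(3) by (rule differentiable_on_add[OF smooth_diffon[OF fg(1)] smooth_diffon[OF fg(2)]])
  qed
  show "\<exists>g\<in>{h. \<exists>f g. smooth_on U f \<and> smooth_on U g \<and> h = (\<lambda>y. f y + g y)}. \<forall>y\<in>U. partial i h y = g y"
    if hh: "h \<in> {h. \<exists>f g. smooth_on U f \<and> smooth_on U g \<and> h = (\<lambda>y. f y + g y)}" for h i
  proof -
    obtain f g where fg: "smooth_on U f" "smooth_on U g" "h = (\<lambda>y. f y + g y)" using hh by blast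
    have "\<forall>y\<in>U. partial i h y = partial i f y + partial i g y"
    proof
      fix y assume y: "y \<in> U"
      show "partial i h y = partial i f y + partial i g y"
        unfolding fg(3) by (rule partial_add[OF smooth_at[OF U fg(1) y] smooth_at[OF U fg(2) y]])
    qed
    moreover have "(\<lambda>y. partial i f y + partial i g y) \<in> {h. \<exists>f g. smooth_on U f \<and> smooth_on U g \<and> h = (\<lambda>y. f y + g y)}"
      using smooth_partial[OF fg(1)] smooth_partial[OF fg(2)] by blast
    ultimately show ?thesis by (intro bexI[where x="\<lambda>y. partial i f y + partial i g y"]) auto
  qed
  show "(\<lambda>y. f y + g y) \<in> {h. \<exists>f g. smooth_on U f \<and> smooth_on U g \<and> h = (\<lambda>y. f y + g y)}"
    using assms(2,3) by blast
qed

definition prodsum :: "((real^'n \<Rightarrow> real) \<times> (real^'n \<Rightarrow> real)) list \<Rightarrow> real^'n \<Rightarrow> real" where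
  "prodsum L y = sum_list (map (\<lambda>p. fst p y * snd p y) L)"

lemma prodsum_partial:
  fixes L :: "((real^'n::finite \<Rightarrow> real) \<times> (real^'n \<Rightarrow> real)) list"
  assumes U: "open U" and y: "y \<in> U" and L: "\<forall>p\<in>set L. smooth_on U (fst p) \<and> smooth_on U (snd p)"
  shows "prodsum L differentiable (at y) \<and>
    partial i (prodsum L) y = prodsum (concat (map (\<lambda>p. [(partial i (fst p), snd p), (fst p, partial i (snd p))]) L)) y"
  using L
proof (induction L)
  case Nil
  have "prodsum [] = (\<lambda>y. 0)" by (auto simp: prodsum_def)
  then show ?case by (simp add: partial_const prodsum_def)
next
  case (Cons p L)
  have e: "prodsum (p # L) = (\<lambda>z. fst p z * snd p z + prodsum L z)" by (auto simp: prodsum_def)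
  have d1: "fst p differentiable (at y)" "snd p differentiable (at y)"
    using Cons.prems smooth_at[OF U _ y] by auto
  have d2: "(\<lambda>z. fst p z * snd p z) differentiable (at y)"
    using d1 by (intro differentiable_mult)
  have IH: "prodsum L differentiable (at y)"
    "partial i (prodsum L) y = prodsum (concat (map (\<lambda>p. [(partial i (fst p), snd p), (fst p, partial i (snd p))]) L)) y"
    using Cons by auto
  show ?case unfolding e
    apply (intro conjI)
     apply (rule differentiable_add[OF d2 IH(1)])
    apply (subst partial_add[OF d2 IH(1)])
    apply (subst partial_mult[OF d1])
    using IH(2) by (simp add: prodsum_def)
qed

lemma smooth_mult:
  assumes U: "open U" and "smooth_on U f" "smooth_on U g"
  shows "smooth_on U (\<lambda>y. f y * g y)"
proof -
  let ?F = "{h. \<exists>L. (\<forall>p\<in>set L. smooth_on U (fst p) \<and> smooth_on U (snd p)) \<and> (\<forall>y\<in>U. h y = prodsum L y)}"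
  have sm: "smooth_on U h" if hh: "h \<in> ?F" for h
  proof (rule smooth_principle[OF U _ _ that])
    show "h differentiable_on U" if hh: "h \<in> ?F" for h
    proof -
      obtain L where L: "\<forall>p\<in>set L. smooth_on U (fst p) \<and> smooth_on U (snd p)" "\<forall>y\<in>U. h y = prodsum L y"
        using hh by blast
      have "prodsum L differentiable_on U"
        by (simp add: differentiable_on_eq_differentiable_at[OF U] prodsum_partial[OF U _ L(1)])
      then show ?thesis using diff_on_transfer[OF U, of h "prodsum L"] L(2) by auto
    qed
    show "\<exists>g\<in>?F. \<forall>y\<in>U. partial i h y = g y" if hh: "h \<in> ?F" for h i
    proof -
      obtain L where L: "\<forall>p\<in>set L. smooth_on U (fst p) \<and> smooth_on U (snd p)" "\<forall>y\<in>U. h y = prodsum L y"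
        using hh by blast
      let ?L = "concat (map (\<lambda>p. [(partial i (fst p), snd p), (fst p, partial i (snd p))]) L)"
      have "\<forall>y\<in>U. partial i h y = prodsum ?L y"
      proof
        fix y assume y: "y \<in> U"
        have "partial i h y = partial i (prodsum L) y" using partial_local[OF U y, of h "prodsum L"] L(2) by auto
        then show "partial i h y = prodsum ?L y" using prodsum_partial[OF U y L(1)] by simp
      qed
      moreover have "\<forall>p\<in>set ?L. smooth_on U (fst p) \<and> smooth_on U (snd p)"
        using L(1) by (simp add: smooth_partial)
      moreover have "prodsum ?L \<in> ?F"
        by (rule CollectI, rule exI[where x="?L"]) (use calculation(2) in simp)
      ultimately show ?thesis by (intro bexI[where x="prodsum ?L"]) simp_all
    qed
  qed
  have "(\<lambda>y. f y * g y) \<in> ?F"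
    using assms by (intro CollectI exI[of _ "[(f,g)]"]) (auto simp: prodsum_def)
  then show ?thesis by (rule sm)
qed

lemma smooth_diff:
  assumes U: "open U" and "smooth_on U f" "smooth_on U g"
  shows "smooth_on U (\<lambda>y. f y - g y)"
proof -
  have "smooth_on U (\<lambda>y. f y + (\<lambda>y. -1) y * g y)"
    by (rule smooth_add[OF U assms(2) smooth_mult[OF U smooth_const[OF U] assms(3)]])
  then show ?thesis by simp
qed

lemma smooth_sum:
  assumes U: "open U" and "finite S" "\<And>k. k \<in> S \<Longrightarrow> smooth_on U (f k)"
  shows "smooth_on U (\<lambda>y. \<Sum>k\<in>S. f k y)"
  using assms(2,3)
proof (induction S rule: finite_induct)
  case empty then show ?case using smooth_const[OF U] by simp
next
  case (insert k S)
  then show ?case using smooth_add[OF U] by simp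
qed


lemma young_est:
  fixes f :: "real^'n::finite \<Rightarrow> real"
  assumes U: "open U" and x: "x \<in> U" and sm: "smooth_on U f" and e: "\<epsilon> > 0"
  shows "\<exists>\<delta>>0. \<forall>h. 0 < h \<and> h < \<delta> \<longrightarrow>
     \<bar>f (x + h *\<^sub>R axis j 1 + h *\<^sub>R axis i 1) - f (x + h *\<^sub>R axis i 1) - f (x + h *\<^sub>R axis j 1) + f x
       - h^2 * frechet_derivative (partial i f) (at x) (axis j 1)\<bar> \<le> 3 * \<epsilon> * h^2"
proof -
  define L where "L = frechet_derivative (partial i f) (at x)"
  define ei where "ei = (axis i 1 :: real^'n)"
  define ej where "ej = (axis j 1 :: real^'n)"
  obtain r where r: "r > 0" "ball x r \<subseteq> U" using U x open_contains_ball by blast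
  have gd: "partial i f differentiable (at x)" using smooth_at[OF U smooth_partial[OF sm] x] .
  then have hd: "(partial i f has_derivative L) (at x)" unfolding L_def using frechet_derivative_works by blast
  then have lin: "linear L" using has_derivative_linear by blast
  from hd have "\<forall>e>0. \<exists>d>0. \<forall>y\<in>UNIV. norm (y - x) < d \<longrightarrow>
      norm (partial i f y - partial i f x - L (y - x)) \<le> e * norm (y - x)"
    using has_derivative_within_alt[of "partial i f" L x UNIV] by simp
  then obtain d where d: "d > 0" "\<And>y. norm (y - x) < d \<Longrightarrow>
      \<bar>partial i f y - partial i f x - L (y - x)\<bar> \<le> \<epsilon> * norm (y - x)"
    using e by fastforce
  have der: "((\<lambda>t. f (p + t *\<^sub>R v)) has_real_derivative partial k f (p + s *\<^sub>R v)) (at s)"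
    if "p + s *\<^sub>R v \<in> U" "v = axis k 1" for p v s k
  proof -
    have "f differentiable (at (p + s *\<^sub>R v))" using smooth_at[OF U sm that(1)] .
    then have fd: "(f has_derivative frechet_derivative f (at (p + s *\<^sub>R v))) (at (p + s *\<^sub>R v))"
      using frechet_derivative_works by blast
    have eq: "partial k f (p + s *\<^sub>R v) = frechet_derivative f (at (p + s *\<^sub>R v)) v"
      using partial_hasD[OF fd, of k] that(2) by simp
    show ?thesis unfolding eq by (rule line_has_deriv[OF fd])
  qed
  show ?thesis unfolding L_def[symmetric]
  proof (intro exI[of _ "min (r/2) (d/2)"] conjI allI impI)
    show "min (r/2) (d/2) > 0" using r d by simp
    fix h :: real assume h: "0 < h \<and> h < min (r/2) (d/2)"
    define \<phi> where "\<phi> s = f ((x + h *\<^sub>R ej) + s *\<^sub>R ei) - f (x + s *\<^sub>R ei)" for s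
    define \<phi>' where "\<phi>' s = partial i f ((x + h *\<^sub>R ej) + s *\<^sub>R ei) - partial i f (x + s *\<^sub>R ei)" for s
    have nei: "norm ei = 1" "norm ej = 1" unfolding ei_def ej_def by simp_all
    have inU: "(x + h *\<^sub>R ej) + s *\<^sub>R ei \<in> U" "x + s *\<^sub>R ei \<in> U" if "0 \<le> s" "s \<le> h" for s
    proof -
      have "norm (h *\<^sub>R ej + s *\<^sub>R ei) \<le> h + s"
        using norm_triangle_ineq[of "h *\<^sub>R ej" "s *\<^sub>R ei"] nei h that by simp
      moreover have "dist x ((x + h *\<^sub>R ej) + s *\<^sub>R ei) = norm (h *\<^sub>R ej + s *\<^sub>R ei)"
        by (metis add.assoc add_diff_cancel_left' dist_commute dist_norm)
      ultimately have "dist x ((x + h *\<^sub>R ej) + s *\<^sub>R ei) < r" using h that by simp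
      then show "(x + h *\<^sub>R ej) + s *\<^sub>R ei \<in> U" using r by auto
      have "dist x (x + s *\<^sub>R ei) < r" using h that nei by (simp add: dist_norm)
      then show "x + s *\<^sub>R ei \<in> U" using r by auto
    qed
    have "\<exists>z. 0 < z \<and> z < h \<and> \<phi> h - \<phi> 0 = (h - 0) * \<phi>' z"
    proof (rule MVT2)
      show "0 < h" using h by simp
      fix s assume s: "0 \<le> s" "s \<le> h"
      show "(\<phi> has_real_derivative \<phi>' s) (at s)"
        unfolding \<phi>_def \<phi>'_def
        by (intro DERIV_diff der[OF inU(1)[OF s]] der[OF inU(2)[OF s]]) (simp_all add: ei_def)
    qed
    then obtain z where z: "0 < z" "z < h" "\<phi> h - \<phi> 0 = h * \<phi>' z" by auto
    have phd: "\<phi> h - \<phi> 0 = f (x + h *\<^sub>R ej + h *\<^sub>R ei) - f (x + h *\<^sub>R ei) - f (x + h *\<^sub>R ej) + f x"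
      unfolding \<phi>_def by simp
    define v1 where "v1 = h *\<^sub>R ej + z *\<^sub>R ei"
    define v2 where "v2 = z *\<^sub>R ei"
    have nv1: "norm v1 \<le> 2 * h"
      using norm_triangle_ineq[of "h *\<^sub>R ej" "z *\<^sub>R ei"] nei h z unfolding v1_def by simp
    have nv2: "norm v2 \<le> h" using nei z unfolding v2_def by simp
    have b1: "\<bar>partial i f (x + v1) - partial i f x - L v1\<bar> \<le> \<epsilon> * norm v1"
      using d(2)[of "x + v1"] nv1 h by simp
    have b2: "\<bar>partial i f (x + v2) - partial i f x - L v2\<bar> \<le> \<epsilon> * norm v2"
      using d(2)[of "x + v2"] nv2 h by simp
    have Lv: "L v1 - L v2 = h * L ej"
      unfolding v1_def v2_def using lin by (simp add: linear_add linear_scale)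
    have pz: "\<phi>' z = partial i f (x + v1) - partial i f (x + v2)"
      unfolding \<phi>'_def v1_def v2_def by (simp add: add.assoc)
    have "\<bar>\<phi>' z - h * L ej\<bar> \<le> \<epsilon> * norm v1 + \<epsilon> * norm v2"
      using b1 b2 Lv pz by linarith
    also have "\<dots> \<le> \<epsilon> * (2 * h) + \<epsilon> * h" using nv1 nv2 e
      by (intro add_mono mult_left_mono) auto
    also have "\<dots> = 3 * \<epsilon> * h" by simp
    finally have "\<bar>\<phi>' z - h * L ej\<bar> \<le> 3 * \<epsilon> * h" .
    then have b3: "h * \<bar>\<phi>' z - h * L ej\<bar> \<le> h * (3 * \<epsilon> * h)" using h by (simp add: mult_left_mono)
    have "\<bar>h * \<phi>' z - h^2 * L ej\<bar> = h * \<bar>\<phi>' z - h * L ej\<bar>"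
    proof -
      have "h * \<phi>' z - h^2 * L ej = h * (\<phi>' z - h * L ej)" by (simp add: power2_eq_square right_diff_distrib)
      then show ?thesis using h by (simp add: abs_mult)
    qed
    moreover have "h * (3 * \<epsilon> * h) = 3 * \<epsilon> * h^2" by (simp add: power2_eq_square)
    ultimately have bnd: "\<bar>h * \<phi>' z - h^2 * L ej\<bar> \<le> 3 * \<epsilon> * h^2" using b3 by linarith
    have hz: "h * \<phi>' z = f (x + h *\<^sub>R ej + h *\<^sub>R ei) - f (x + h *\<^sub>R ei) - f (x + h *\<^sub>R ej) + f x"
      using z(3) phd by linarith
    have "\<bar>f (x + h *\<^sub>R ej + h *\<^sub>R ei) - f (x + h *\<^sub>R ei) - f (x + h *\<^sub>R ej) + f x
       - h^2 * L ej\<bar> \<le> 3 * \<epsilon> * h^2"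
      by (subst hz[symmetric]) (rule bnd)
    then show "\<bar>f (x + h *\<^sub>R axis j 1 + h *\<^sub>R axis i 1) - f (x + h *\<^sub>R axis i 1) - f (x + h *\<^sub>R axis j 1) + f x
       - h^2 * L (axis j 1)\<bar> \<le> 3 * \<epsilon> * h^2"
      unfolding ei_def ej_def .
  qed
qed

lemma schwarz:
  fixes f :: "real^'n::finite \<Rightarrow> real"
  assumes U: "open U" and x: "x \<in> U" and sm: "smooth_on U f"
  shows "partial j (partial i f) x = partial i (partial j f) x"
proof -
  define A where "A = frechet_derivative (partial i f) (at x) (axis j 1)"
  define B where "B = frechet_derivative (partial j f) (at x) (axis i 1)"
  have pa: "partial j (partial i f) x = A" unfolding A_def
    by (rule partial_frechet[OF smooth_at[OF U smooth_partial[OF sm] x]])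
  have pb: "partial i (partial j f) x = B" unfolding B_def
    by (rule partial_frechet[OF smooth_at[OF U smooth_partial[OF sm] x]])
  have "\<bar>A - B\<bar> \<le> 6 * \<epsilon>" if e: "\<epsilon> > 0" for \<epsilon>
  proof -
    obtain d1 where d1: "d1 > 0" "\<And>h. 0 < h \<and> h < d1 \<Longrightarrow>
      \<bar>f (x + h *\<^sub>R axis j 1 + h *\<^sub>R axis i 1) - f (x + h *\<^sub>R axis i 1) - f (x + h *\<^sub>R axis j 1) + f x
       - h^2 * A\<bar> \<le> 3 * \<epsilon> * h^2"
      using young_est[OF U x sm e, of j i] unfolding A_def by blast
    obtain d2 where d2: "d2 > 0" "\<And>h. 0 < h \<and> h < d2 \<Longrightarrow>
      \<bar>f (x + h *\<^sub>R axis i 1 + h *\<^sub>R axis j 1) - f (x + h *\<^sub>R axis j 1) - f (x + h *\<^sub>R axis i 1) + f x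
       - h^2 * B\<bar> \<le> 3 * \<epsilon> * h^2"
      using young_est[OF U x sm e, of i j] unfolding B_def by blast
    define h where "h = min d1 d2 / 2"
    have h: "0 < h" "h < d1" "h < d2" using d1 d2 unfolding h_def by auto
    have c: "x + h *\<^sub>R axis i 1 + h *\<^sub>R axis j 1 = x + h *\<^sub>R axis j 1 + h *\<^sub>R axis i 1"
      by (simp add: algebra_simps)
    define D where "D = f (x + h *\<^sub>R axis j 1 + h *\<^sub>R axis i 1) - f (x + h *\<^sub>R axis i 1) - f (x + h *\<^sub>R axis j 1) + f x"
    have t1: "\<bar>D - h^2 * A\<bar> \<le> 3 * \<epsilon> * h^2" using d1(2)[of h] h unfolding D_def by simp
    have t2: "\<bar>D - h^2 * B\<bar> \<le> 3 * \<epsilon> * h^2" using d2(2)[of h] h unfolding D_def c by simp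
    have "\<bar>h^2 * A - h^2 * B\<bar> \<le> 6 * \<epsilon> * h^2"
      using t1 t2 unfolding abs_le_iff by linarith
    moreover have "\<bar>h^2 * A - h^2 * B\<bar> = h^2 * \<bar>A - B\<bar>"
      by (simp add: abs_mult right_diff_distrib[symmetric])
    ultimately have "h^2 * \<bar>A - B\<bar> \<le> h^2 * (6 * \<epsilon>)" by (simp add: mult.commute mult.left_commute)
    then show ?thesis using h by simp
  qed
  then have "A = B"
  proof -
    assume *: "\<And>\<epsilon>. \<epsilon> > 0 \<Longrightarrow> \<bar>A - B\<bar> \<le> 6 * \<epsilon>"
    show "A = B"
    proof (rule ccontr)
      assume "A \<noteq> B"
      then have p: "\<bar>A - B\<bar> > 0" by simp
      have "\<bar>A - B\<bar> \<le> 6 * (\<bar>A - B\<bar> / 12)" using *[of "\<bar>A - B\<bar> / 12"] p by simp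
      then show False using p by simp
    qed
  qed
  then show ?thesis using pa pb by simp
qed


definition N :: "('n::finite \<Rightarrow> 'n \<Rightarrow> 'n \<Rightarrow> real^'n \<Rightarrow> real) \<Rightarrow> ('n \<Rightarrow> 'n \<Rightarrow> 'n \<Rightarrow> 'n \<Rightarrow> real^'n \<Rightarrow> real)
   \<Rightarrow> 'n \<Rightarrow> 'n \<Rightarrow> 'n \<Rightarrow> 'n \<Rightarrow> 'n \<Rightarrow> real^'n \<Rightarrow> real" where
  "N Gam t b c d e f y = partial b (t c d e f) y - (\<Sum>k\<in>UNIV. Gam k b c y * t k d e f y)
     - (\<Sum>k\<in>UNIV. Gam k b d y * t c k e f y) - (\<Sum>k\<in>UNIV. Gam k b e y * t c d k f y)
     + (\<Sum>k\<in>UNIV. Gam f b k y * t c d e k y)"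

definition NN :: "('n::finite \<Rightarrow> 'n \<Rightarrow> 'n \<Rightarrow> real^'n \<Rightarrow> real) \<Rightarrow> ('n \<Rightarrow> 'n \<Rightarrow> 'n \<Rightarrow> 'n \<Rightarrow> real^'n \<Rightarrow> real)
   \<Rightarrow> 'n \<Rightarrow> 'n \<Rightarrow> 'n \<Rightarrow> 'n \<Rightarrow> 'n \<Rightarrow> 'n \<Rightarrow> real^'n \<Rightarrow> real" where
  "NN Gam t a b c d e f y = partial a (N Gam t b c d e f) y - (\<Sum>k\<in>UNIV. Gam k a b y * N Gam t k c d e f y)
     - (\<Sum>k\<in>UNIV. Gam k a c y * N Gam t b k d e f y) - (\<Sum>k\<in>UNIV. Gam k a d y * N Gam t b c k e f y)
     - (\<Sum>k\<in>UNIV. Gam k a e y * N Gam t b c d k f y) + (\<Sum>k\<in>UNIV. Gam f a k y * N Gam t b c d e k y)"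

lemma N_fun: "N Gam t b c d e f = (\<lambda>y. partial b (t c d e f) y - (\<Sum>k\<in>UNIV. Gam k b c y * t k d e f y)
     - (\<Sum>k\<in>UNIV. Gam k b d y * t c k e f y) - (\<Sum>k\<in>UNIV. Gam k b e y * t c d k f y)
     + (\<Sum>k\<in>UNIV. Gam f b k y * t c d e k y))"
  by (rule ext) (simp add: N_def)

lemma riem_fun: "riem Gam a b c d = (\<lambda>y. partial a (Gam d b c) y - partial b (Gam d a c) y
     - (\<Sum>k\<in>UNIV. Gam k a c y * Gam d b k y) + (\<Sum>k\<in>UNIV. Gam d a k y * Gam k b c y))"
  by (rule ext) (simp add: riem_def)

lemma dsum0:
  fixes W :: "'a::finite \<Rightarrow> 'a \<Rightarrow> real"
  assumes "\<And>k l. W k l + W l k = 0"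
  shows "(\<Sum>k\<in>UNIV. \<Sum>l\<in>UNIV. W k l) = 0"
proof -
  have "(\<Sum>k\<in>UNIV. \<Sum>l\<in>UNIV. W k l) = (\<Sum>k\<in>UNIV. \<Sum>l\<in>UNIV. W l k)"
    by (rule sum.swap)
  then have "2 * (\<Sum>k\<in>UNIV. \<Sum>l\<in>UNIV. W k l) = (\<Sum>k\<in>UNIV. \<Sum>l\<in>UNIV. W k l + W l k)"
    by (simp add: sum.distrib)
  also have "\<dots> = 0" using assms by simp
  finally show ?thesis by simp
qed

locale conn =
  fixes U :: "(real^'n::finite) set" and Gam :: "'n \<Rightarrow> 'n \<Rightarrow> 'n \<Rightarrow> real^'n \<Rightarrow> real"
  assumes U: "open U" and smG: "\<And>c a b. smooth_on U (Gam c a b)"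
    and symG: "\<And>c a b. Gam c a b = Gam c b a"
begin

lemma sm_G[simp]: "smooth_on U (Gam c a b)" by (rule smG)
lemma sm_add[simp]: "smooth_on U f \<Longrightarrow> smooth_on U g \<Longrightarrow> smooth_on U (\<lambda>y. f y + g y)"
  using smooth_add[OF U] by blast
lemma sm_diff[simp]: "smooth_on U f \<Longrightarrow> smooth_on U g \<Longrightarrow> smooth_on U (\<lambda>y. f y - g y)"
  using smooth_diff[OF U] by blast
lemma sm_mult[simp]: "smooth_on U f \<Longrightarrow> smooth_on U g \<Longrightarrow> smooth_on U (\<lambda>y. f y * g y)"
  using smooth_mult[OF U] by blast
lemma sm_uminus[simp]: assumes "smooth_on U f" shows "smooth_on U (\<lambda>y. - f y)"
proof -
  have "smooth_on U (\<lambda>y. (\<lambda>_. 0) y - f y)" by (rule smooth_diff[OF U smooth_const[OF U] assms])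
  then show ?thesis by simp
qed
lemma sm_sum[simp]: "(\<And>k::'n. smooth_on U (f k)) \<Longrightarrow> smooth_on U (\<lambda>y. \<Sum>k\<in>UNIV. f k y)"
  using smooth_sum[OF U, of UNIV f] by simp
lemma sm_partial[simp]: "smooth_on U f \<Longrightarrow> smooth_on U (partial i f)"
  by (rule smooth_partial)
lemma sm_at[simp]: "smooth_on U f \<Longrightarrow> y \<in> U \<Longrightarrow> f differentiable (at y)"
  by (rule smooth_at[OF U])

lemmas p_rules = partial_add partial_diff partial_mult partial_sum partial_uminus partial_const

lemma sm_riem[simp]: "smooth_on U (riem Gam a b c d)"
  unfolding riem_fun by simp

lemma comm:
  assumes y: "y \<in> U" and smt: "\<And>c d e f. smooth_on U (t c d e f)"
  shows "NN Gam t a b c d e f y - NN Gam t b a c d e f y =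
    - (\<Sum>m\<in>UNIV. riem Gam a b c m y * t m d e f y) - (\<Sum>m\<in>UNIV. riem Gam a b d m y * t c m e f y)
    - (\<Sum>m\<in>UNIV. riem Gam a b e m y * t c d m f y) + (\<Sum>m\<in>UNIV. riem Gam a b m f y * t c d e m y)"
proof -
  have sw: "partial a (partial b (t c d e f)) y = partial b (partial a (t c d e f)) y"
    by (rule schwarz[OF U y smt])
  show ?thesis
  unfolding NN_def N_fun riem_def
  apply (simp add: p_rules y smt)
  apply (simp add: sw sum_distrib_left sum_distrib_right sum.distrib sum_subtractf algebra_simps symG)
  apply (subst eq_iff_diff_eq_0)
  apply (simp only: sum.distrib[symmetric] sum_subtractf[symmetric])
  apply (rule dsum0)
  apply (simp add: algebra_simps symG)
  done
qed

lemma swG: "y \<in> U \<Longrightarrow> partial i (partial j (Gam c a b)) y = partial j (partial i (Gam c a b)) y"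
  by (rule schwarz[OF U _ smG])

lemma bianchi2:
  assumes y: "y \<in> U"
  shows "N Gam (riem Gam) a b c e f y + N Gam (riem Gam) b c a e f y + N Gam (riem Gam) c a b e f y = 0"
  unfolding N_def riem_fun
  apply (simp add: p_rules y)
  apply (simp add: swG[OF y] sum_distrib_left sum_distrib_right sum.distrib sum_subtractf algebra_simps symG)
  apply (subst eq_iff_diff_eq_0)
  apply (simp only: sum.distrib[symmetric] sum_subtractf[symmetric])
  apply (rule dsum0)
  apply (simp add: algebra_simps symG)
  done

lemma riem_anti: "riem Gam b a c d y = - riem Gam a b c d y"
  by (simp add: riem_def algebra_simps)

lemma bianchi1: "riem Gam a b c d y + riem Gam b c a d y + riem Gam c a b d y = 0"
  unfolding riem_def
  apply (simp add: algebra_simps symG)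
  done

lemma sm_N[simp]: "smooth_on U (N Gam (riem Gam) b c d e f)"
  unfolding N_fun by simp

lemma N_anti:
  assumes y: "y \<in> U"
  shows "N Gam (riem Gam) p r q e f y + N Gam (riem Gam) p q r e f y = 0"
  unfolding N_def riem_fun
  apply (simp add: p_rules y)
  apply (simp add: swG[OF y] sum_distrib_left sum_distrib_right sum.distrib sum_subtractf algebra_simps symG)
  done

abbreviation "NR \<equiv> N Gam (riem Gam)"
abbreviation "NNR \<equiv> NN Gam (riem Gam)"

lemma NN_anti:
  assumes x: "x \<in> U"
  shows "NNR a b d c e f x + NNR a b c d e f x = 0"
proof -
  have "partial a (NR b d c e f) x + partial a (NR b c d e f) x
      = partial a (\<lambda>y. NR b d c e f y + NR b c d e f y) x"
    by (simp add: p_rules x)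
  also have "\<dots> = partial a (\<lambda>y. 0) x"
    by (rule partial_local[OF U x]) (simp add: N_anti)
  finally have p: "partial a (NR b d c e f) x + partial a (NR b c d e f) x = 0"
    by (simp add: partial_const)
  have "NNR a b d c e f x + NNR a b c d e f x =
     (partial a (NR b d c e f) x + partial a (NR b c d e f) x)
     - (\<Sum>k\<in>UNIV. Gam k a b x * (NR k d c e f x + NR k c d e f x)
          + Gam k a d x * (NR b k c e f x + NR b c k e f x)
          + Gam k a c x * (NR b d k e f x + NR b k d e f x)
          + Gam k a e x * (NR b d c k f x + NR b c d k f x))
     + (\<Sum>k\<in>UNIV. Gam f a k x * (NR b d c e k x + NR b c d e k x))"
    unfolding NN_def by (simp add: algebra_simps sum.distrib sum_subtractf)
  also have "\<dots> = 0" using p by (simp add: N_anti[OF x])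
  finally show ?thesis .
qed

lemma NN_bian:
  assumes x: "x \<in> U"
  shows "NNR a b c d e f x + NNR a c d b e f x + NNR a d b c e f x = 0"
proof -
  have "partial a (NR b c d e f) x + partial a (NR c d b e f) x + partial a (NR d b c e f) x
      = partial a (\<lambda>y. NR b c d e f y + NR c d b e f y + NR d b c e f y) x"
    by (simp add: p_rules x)
  also have "\<dots> = partial a (\<lambda>y. 0) x"
    by (rule partial_local[OF U x]) (simp add: bianchi2)
  finally have p: "partial a (NR b c d e f) x + partial a (NR c d b e f) x + partial a (NR d b c e f) x = 0"
    by (simp add: partial_const)
  have "NNR a b c d e f x + NNR a c d b e f x + NNR a d b c e f x =
     (partial a (NR b c d e f) x + partial a (NR c d b e f) x + partial a (NR d b c e f) x)
     - (\<Sum>k\<in>UNIV. Gam k a b x * (NR k c d e f x + NR c d k e f x + NR d k c e f x)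
          + Gam k a c x * (NR k d b e f x + NR d b k e f x + NR b k d e f x)
          + Gam k a d x * (NR k b c e f x + NR b c k e f x + NR c k b e f x)
          + Gam k a e x * (NR b c d k f x + NR c d b k f x + NR d b c k f x))
     + (\<Sum>k\<in>UNIV. Gam f a k x * (NR b c d e k x + NR c d b e k x + NR d b c e k x))"
    unfolding NN_def by (simp add: algebra_simps sum.distrib sum_subtractf)
  also have "\<dots> = 0" using p by (simp add: bianchi2[OF x])
  finally show ?thesis .
qed

end

lemma RR:
  fixes r :: "'n::finite \<Rightarrow> 'n \<Rightarrow> 'n \<Rightarrow> 'n \<Rightarrow> real"
    and e f :: "'n"
  assumes anti: "\<And>p q s t. r q p s t = - r p q s t"
    and bian: "\<And>p q s t. r p q s t + r q s p t + r s p q t = 0"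
  defines "C \<equiv> \<lambda>p q s u. - (\<Sum>m\<in>UNIV. r p q s m * r m u e f) - (\<Sum>m\<in>UNIV. r p q u m * r s m e f)
      - (\<Sum>m\<in>UNIV. r p q e m * r s u m f) + (\<Sum>m\<in>UNIV. r p q m f * r s u e m)"
  shows "C a b c d + C b c d a + C c d a b + C d a b c - C a c d b - C b d a c =
    2 * ((\<Sum>m\<in>UNIV. r a b c m * r d m e f + r b c d m * r a m e f + r c d a m * r b m e f + r d a b m * r c m e f)
       - (\<Sum>m\<in>UNIV. r a c e m * r b d m f) + (\<Sum>m\<in>UNIV. r a c m f * r b d e m))"
proof -
  have bel: "r q s p t = r p s q t - r p q s t" for p q s t
    using bian[of p q s t] anti[of p s q t] by linarith
  show ?thesis
    unfolding C_def
    apply (subst eq_iff_diff_eq_0)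
    apply (simp only: sum_distrib_left sum_negf[symmetric] sum.distrib[symmetric] sum_subtractf[symmetric])
    apply (rule sum.neutral)
    apply (rule ballI)
    subgoal for m
      by (simp add: anti[where p=a and q=b] anti[where p=a and q=c] anti[where p=a and q=d] anti[where p=b and q=c] anti[where p=b and q=d] anti[where p=c and q=d]
          anti[where p=m and q=a] anti[where p=m and q=b] anti[where p=m and q=c] anti[where p=m and q=d]
          bel[where p=a and q=b and s=c] bel[where p=a and q=b and s=d] bel[where p=a and q=c and s=d] bel[where p=b and q=c and s=d] algebra_simps)
    done
qed

lemma lincomb:
  fixes q_abcd q_bcda q_cdab q_dabc q_acdb q_adbc q_bdac q_bacd q_cabd q_cbda q_dbca q_dcab q_cadb q_dbac
    C1 C2 C3 C4 C5 C6 X :: real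
  assumes "2 * X = C1 + C2 + C3 + C4 - C5 - C6"
    "q_abcd - q_bacd = C1" "q_bcda - q_cbda = C2" "q_cdab - q_dcab = C3" "q_dabc - q_adbc = C4"
    "q_acdb - q_cadb = C5" "q_bdac - q_dbac = C6"
    "q_abcd + q_acdb + q_adbc = 0" "q_bcda + q_bdac + q_bacd = 0"
    "q_cdab + q_cabd + q_cbda = 0" "q_dabc + q_dbca + q_dcab = 0"
    "q_cadb + q_cabd = 0" "q_dbac + q_dbca = 0"
  shows "q_abcd + q_bcda + q_cdab + q_dabc = X"
  using assms by linarith

context conn begin

lemma commR:
  assumes x: "x \<in> U"
  shows "NNR a b c d e f x - NNR b a c d e f x =
    - (\<Sum>m\<in>UNIV. riem Gam a b c m x * riem Gam m d e f x) - (\<Sum>m\<in>UNIV. riem Gam a b d m x * riem Gam c m e f x)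
    - (\<Sum>m\<in>UNIV. riem Gam a b e m x * riem Gam c d m f x) + (\<Sum>m\<in>UNIV. riem Gam a b m f x * riem Gam c d e m x)"
  using comm[where t="riem Gam", OF x] by simp

lemma main_sym:
  assumes x: "x \<in> U"
  shows "NNR a b c d e f x + NNR b c d a e f x + NNR c d a b e f x + NNR d a b c e f x
     = (\<Sum>m\<in>UNIV. riem Gam a b c m x * riem Gam d m e f x
          + riem Gam b c d m x * riem Gam a m e f x
          + riem Gam c d a m x * riem Gam b m e f x
          + riem Gam d a b m x * riem Gam c m e f x)
       - (\<Sum>m\<in>UNIV. riem Gam a c e m x * riem Gam b d m f x)
       + (\<Sum>m\<in>UNIV. riem Gam a c m f x * riem Gam b d e m x)"
proof -
  have rr: "(- (\<Sum>m\<in>UNIV. riem Gam a b c m x * riem Gam m d e f x) - (\<Sum>m\<in>UNIV. riem Gam a b d m x * riem Gam c m e f x) - (\<Sum>m\<in>UNIV. riem Gam a b e m x * riem Gam c d m f x) + (\<Sum>m\<in>UNIV. riem Gam a b m f x * riem Gam c d e m x)) + (- (\<Sum>m\<in>UNIV. riem Gam b c d m x * riem Gam m a e f x) - (\<Sum>m\<in>UNIV. riem Gam b c a m x * riem Gam d m e f x) - (\<Sum>m\<in>UNIV. riem Gam b c e m x * riem Gam d a m f x) + (\<Sum>m\<in>UNIV. riem Gam b c m f x * riem Gam d a e m x)) + (- (\<Sum>m\<in>UNIV. riem Gam c d a m x * riem Gam m b e f x) - (\<Sum>m\<in>UNIV. riem Gam c d b m x * riem Gam a m e f x) - (\<Sum>m\<in>UNIV.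 riem Gam c d e m x * riem Gam a b m f x) + (\<Sum>m\<in>UNIV. riem Gam c d m f x * riem Gam a b e m x)) + (- (\<Sum>m\<in>UNIV. riem Gam d a b m x * riem Gam m c e f x) - (\<Sum>m\<in>UNIV. riem Gam d a c m x * riem Gam b m e f x) - (\<Sum>m\<in>UNIV. riem Gam d a e m x * riem Gam b c m f x) + (\<Sum>m\<in>UNIV. riem Gam d a m f x * riem Gam b c e m x)) - (- (\<Sum>m\<in>UNIV. riem Gam a c d m x * riem Gam m b e f x) - (\<Sum>m\<in>UNIV. riem Gam a c b m x * riem Gam d m e f x) - (\<Sum>m\<in>UNIV. riem Gam a c e m x * riem Gam d b m f x) + (\<Sum>m\<in>UNIV. riem Gam a c m f x * riem Gam d b e m x)) - (- (\<Sum>m\<in>UNIV. riem Gam b d a m x * riem Gam m c e f x) - (\<Sum>m\<in>UNIV. riem Gam b d c m x * riem Gam a m e f x) - (\<Sum>m\<in>UNIV. riem Gam b d e m x * riem Gam a c m f x) + (\<Sum>m\<in>UNIV. riem Gam b d m f x * riem Gam a c e m x))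
    = 2 * ((\<Sum>m\<in>UNIV. riem Gam a b c m x * riem Gam d m e f x
          + riem Gam b c d m x * riem Gam a m e f x
          + riem Gam c d a m x * riem Gam b m e f x
          + riem Gam d a b m x * riem Gam c m e f x)
       - (\<Sum>m\<in>UNIV. riem Gam a c e m x * riem Gam b d m f x)
       + (\<Sum>m\<in>UNIV. riem Gam a c m f x * riem Gam b d e m x))"
    apply (rule RR[where r="\<lambda>p q s t. riem Gam p q s t x" and e=e and f=f])
     apply (rule riem_anti)
    apply (rule bianchi1)
    done
  note c1 = commR[OF x, where a=a and b=b and c=c and d=d and e=e and f=f]
  note c2 = commR[OF x, where a=b and b=c and c=d and d=a and e=e and f=f]
  note c3 = commR[OF x, where a=c and b=d and c=a and d=b and e=e and f=f]
  note c4 = commR[OF x, where a=d and b=a and c=b and d=c and e=e and f=f]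
  note c5 = commR[OF x, where a=a and b=c and c=d and d=b and e=e and f=f]
  note c6 = commR[OF x, where a=b and b=d and c=a and d=c and e=e and f=f]
  note b1 = NN_bian[OF x, where a=a and b=b and c=c and d=d and e=e and f=f]
  note b2 = NN_bian[OF x, where a=b and b=c and c=d and d=a and e=e and f=f]
  note b3 = NN_bian[OF x, where a=c and b=d and c=a and d=b and e=e and f=f]
  note b4 = NN_bian[OF x, where a=d and b=a and c=b and d=c and e=e and f=f]
  note a1 = NN_anti[OF x, where a=c and b=a and c=b and d=d and e=e and f=f]
  note a2 = NN_anti[OF x, where a=d and b=b and c=c and d=a and e=e and f=f]
  show ?thesis by (rule lincomb[OF rr[symmetric] c1 c2 c3 c4 c5 c6 b1 b2 b3 b4 a1 a2])
qed

end


lemma sum4: "(\<Sum>i::nat<4. g i) = g 0 + g 1 + g 2 + (g 3 :: real)"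
  by (simp add: numeral_eq_Suc)
lemma sum3: "(\<Sum>i::nat<3. g i) = g 0 + g 1 + (g 2 :: real)"
  by (simp add: numeral_eq_Suc)

lemma riemT_eq: "riemT Gam [c,d,e] [f] = riem Gam c d e f"
  by (rule ext) (simp add: riemT_def)

lemma nablaR_eq: "nabla Gam (riemT Gam) [b,c,d,e] [f] = N Gam (riem Gam) b c d e f"
  by (rule ext) (simp add: nabla_def N_def riemT_eq riemT_def sum3 algebra_simps)

lemma nabla2_eq: "nabla Gam (nabla Gam (riemT Gam)) [a,b,c,d,e] [f] y = NN Gam (riem Gam) a b c d e f y"
  by (simp add: nabla_def[of Gam "nabla Gam (riemT Gam)"] nablaR_eq NN_def sum4 algebra_simps)

lemma riem_local:
  assumes U: "open U" and eq: "\<And>c a b y. y \<in> U \<Longrightarrow> G1 c a b y = G2 c a b y" and y: "y \<in> U"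
  shows "riem G1 a b c d y = riem G2 a b c d y"
proof -
  have "partial i (G1 p q r) y = partial i (G2 p q r) y" for i p q r
    by (rule partial_local[OF U y]) (simp add: eq)
  then show ?thesis unfolding riem_def using eq[OF y] by simp
qed

lemma nabla_local:
  assumes U: "open U" and eq: "\<And>c a b y. y \<in> U \<Longrightarrow> G1 c a b y = G2 c a b y"
    and teq: "\<And>ls us y. y \<in> U \<Longrightarrow> T1 ls us y = T2 ls us y" and y: "y \<in> U"
  shows "nabla G1 T1 ls us y = nabla G2 T2 ls us y"
proof (cases ls)
  case Nil then show ?thesis by (simp add: nabla_def)
next
  case (Cons a ls')
  have "partial a (T1 ls' us) y = partial a (T2 ls' us) y"
    by (rule partial_local[OF U y]) (simp add: teq)
  then show ?thesis unfolding nabla_def Cons using eq[OF y] teq[OF y] by simp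
qed

theorem mainTheorem1:
  fixes Gam :: "'n::finite \<Rightarrow> 'n \<Rightarrow> 'n \<Rightarrow> real^'n \<Rightarrow> real"
    and U :: "(real^'n) set"
  assumes "open U"
    and "\<And>c a b. smooth_on U (Gam c a b)"
    and "\<And>c a b x. x \<in> U \<Longrightarrow> Gam c a b x = Gam c b a x"
    and "x \<in> U"
  shows "nabla Gam (nabla Gam (riemT Gam)) [a, b, c, d, e] [f] x
       + nabla Gam (nabla Gam (riemT Gam)) [b, c, d, a, e] [f] x
       + nabla Gam (nabla Gam (riemT Gam)) [c, d, a, b, e] [f] x
       + nabla Gam (nabla Gam (riemT Gam)) [d, a, b, c, e] [f] x
     = (\<Sum>m\<in>UNIV. riem Gam a b c m x * riem Gam d m e f x
          + riem Gam b c d m x * riem Gam a m e f x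
          + riem Gam c d a m x * riem Gam b m e f x
          + riem Gam d a b m x * riem Gam c m e f x)
       - (\<Sum>m\<in>UNIV. riem Gam a c e m x * riem Gam b d m f x)
       + (\<Sum>m\<in>UNIV. riem Gam a c m f x * riem Gam b d e m x)"
proof -
  note U = assms(1) and x = assms(4)
  define Gs where "Gs c a b y = (Gam c a b y + Gam c b a y) / 2" for c a b y
  have eqG: "\<And>c a b y. y \<in> U \<Longrightarrow> Gam c a b y = Gs c a b y"
    unfolding Gs_def using assms(3) by simp
  have smGs: "smooth_on U (Gs c a b)" for c a b
  proof -
    have "smooth_on U (\<lambda>y. (\<lambda>_. 1/2) y * (Gam c a b y + Gam c b a y))"
      by (intro smooth_mult[OF U] smooth_const[OF U] smooth_add[OF U] assms(2))
    moreover have "(\<lambda>y. (\<lambda>_. 1/2) y * (Gam c a b y + Gam c b a y)) = Gs c a b"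
      by (rule ext) (simp add: Gs_def)
    ultimately show ?thesis by simp
  qed
  have symGs: "Gs c a b = Gs c b a" for c a b
    by (rule ext) (simp add: Gs_def add.commute)
  interpret conn U Gs
    by unfold_locales (use U smGs symGs in auto)
  have rl: "riem Gam p q r s y = riem Gs p q r s y" if "y \<in> U" for p q r s y
    by (rule riem_local[OF U eqG that])
  have n1: "nabla Gam (riemT Gam) ls us y = nabla Gs (riemT Gs) ls us y" if "y \<in> U" for ls us y
    by (rule nabla_local[OF U eqG _ that]) (simp_all add: riemT_def rl)
  have n2: "nabla Gam (nabla Gam (riemT Gam)) ls us x = nabla Gs (nabla Gs (riemT Gs)) ls us x" for ls us
    by (rule nabla_local[OF U eqG _ x]) (simp_all add: n1)
  show ?thesis
    apply (simp only: n2 rl[OF x])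
    apply (simp only: nabla2_eq)
    by (rule main_sym[OF x])
qed


end
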